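(* Let $\vec G=(V,\vec E)$ be a totally cyclic directed graph without loops and without parallel or antiparallel edges, whose underlying simple graph is three-edge-connected. Then there is a total order $<$ of $\vec E$ such that there is a strong map $\mathcal M^*(\vec G)\longrightarrow\mathcal M(<)$.
   Context: $\mathcal M(\vec G)$ is the oriented matroid of the directed graph on its edge set (signed circuits: cycles of the underlying graph, with edges signed $+$ or $-$ according to whether they are traversed forwards or backwards); $\mathcal M^*(\vec G)$ is its dual, whose signed circuits are the signed minimal cuts $\big(\{(u,w)\in\vec E:u\in S,w\notin S\},\{(u,w)\in\vec E:w\in S,u\notin S\}\big)$ for $S\subset V$ with $S$ and $V\setminus S$ both inducing connected subgraphs. $\vec G$ is totally cyclic if every edge lies in a directed cycle. For a finite set $E$ totally ordered by $<$, $\mathcal M(<)$ is the uniform rank 2 oriented matroid on $E$ whose signed circuits are $(\{e_1,e_3\},\{e_2\})$ and $(\{e_2\},\{e_1,e_3\})$ for $e_1<e_2<e_3$, and whose signed cocircuits are $(\{e':e'<e\},\{e'':e''>e\})$ and its opposite. A strong map $\mathcal M_1\longrightarrow\mathcal M_2$ (same ground set) exists if every cocircuit of $\mathcal M_2$ is a covector of $\mathcal M_1$, equivalently every circuit of $\mathcal M_1$ is a vector of $\mathcal M_2$. *)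

theory Defs
  imports Main
begin

text \<open>Digraph: finite vertex set V, edge set E of ordered pairs (no parallel edges by construction).\<close>

definition digraph_ok :: "'v set \<Rightarrow> ('v \<times> 'v) set \<Rightarrow> bool" where
  "digraph_ok V E \<longleftrightarrow> finite V \<and> E \<subseteq> V \<times> V
     \<and> (\<forall>u. (u, u) \<notin> E)
     \<and> (\<forall>u w. (u, w) \<in> E \<longrightarrow> (w, u) \<notin> E)"

text \<open>Every edge lies in a directed cycle: edge (u,w) closes a directed cycle iff w reaches u.\<close>
definition totally_cyclic :: "('v \<times> 'v) set \<Rightarrow> bool" where
  "totally_cyclic E \<longleftrightarrow> (\<forall>(u, w) \<in> E. (w, u) \<in> E\<^sup>*)"

definition underlying_edges :: "('v \<times> 'v) set \<Rightarrow> 'v set set" where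
  "underlying_edges E = {{u, w} | u w. (u, w) \<in> E}"

definition connected_on :: "'v set \<Rightarrow> 'v set set \<Rightarrow> bool" where
  "connected_on W F \<longleftrightarrow>
     (\<forall>u\<in>W. \<forall>w\<in>W. (u, w) \<in> {(x, y). x \<in> W \<and> y \<in> W \<and> {x, y} \<in> F}\<^sup>*)"

definition three_edge_connected :: "'v set \<Rightarrow> 'v set set \<Rightarrow> bool" where
  "three_edge_connected V F \<longleftrightarrow> (\<forall>D \<subseteq> F. card D < 3 \<longrightarrow> connected_on V (F - D))"

text \<open>Signed sets are pairs (positive part, negative part).\<close>
type_synonym 'e signed = "'e set \<times> 'e set"

definition compose :: "'e signed \<Rightarrow> 'e signed \<Rightarrow> 'e signed" where
  "compose X Y = (fst X \<union> (fst Y - snd X), snd X \<union> (snd Y - fst X))"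

text \<open>Vectors of an oriented matroid given by its signed circuits: all compositions of circuits.\<close>
inductive_set vectors_of :: "'e signed set \<Rightarrow> 'e signed set" for C where
  zero: "({}, {}) \<in> vectors_of C"
| comp: "X \<in> vectors_of C \<Longrightarrow> Y \<in> C \<Longrightarrow> compose X Y \<in> vectors_of C"

text \<open>Signed circuits of the dual M*(G): signed minimal cuts.\<close>
definition cut_circuits :: "'v set \<Rightarrow> ('v \<times> 'v) set \<Rightarrow> ('v \<times> 'v) signed set" where
  "cut_circuits V E =
     {({(u, w) \<in> E. u \<in> S \<and> w \<notin> S}, {(u, w) \<in> E. w \<in> S \<and> u \<notin> S}) | S.
        S \<subseteq> V \<and> S \<noteq> {} \<and> S \<noteq> V
        \<and> connected_on S (underlying_edges E) \<and> connected_on (V - S) (underlying_edges E)}"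

definition order_circuits :: "('e \<times> 'e) set \<Rightarrow> 'e signed set" where
  "order_circuits r =
     {({e1, e3}, {e2}) | e1 e2 e3. (e1, e2) \<in> r \<and> (e2, e3) \<in> r}
     \<union> {({e2}, {e1, e3}) | e1 e2 e3. (e1, e2) \<in> r \<and> (e2, e3) \<in> r}"

definition strong_map :: "'e signed set \<Rightarrow> 'e signed set \<Rightarrow> bool" where
  "strong_map C1 C2 \<longleftrightarrow> C1 \<subseteq> vectors_of C2"

end

theory Submission
  imports Defs Complex_Main
begin

definition outs :: "('v \<times> 'v) set \<Rightarrow> 'v set \<Rightarrow> ('v \<times> 'v \<Rightarrow> real) \<Rightarrow> real" where
  "outs E S h = (\<Sum>e\<in>{e\<in>E. fst e \<in> S \<and> snd e \<notin> S}. h e)"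
definition ins :: "('v \<times> 'v) set \<Rightarrow> 'v set \<Rightarrow> ('v \<times> 'v \<Rightarrow> real) \<Rightarrow> real" where
  "ins E S h = (\<Sum>e\<in>{e\<in>E. snd e \<in> S \<and> fst e \<notin> S}. h e)"
definition flow :: "('v \<times> 'v) set \<Rightarrow> 'v \<Rightarrow> 'v \<Rightarrow> ('v \<times> 'v \<Rightarrow> real) \<Rightarrow> bool" where
  "flow E x y h \<longleftrightarrow> (\<forall>S. outs E S h - ins E S h = (if x \<in> S then 1 else 0) - (if y \<in> S then 1 else 0))"
definition circ :: "('v \<times> 'v) set \<Rightarrow> ('v \<times> 'v \<Rightarrow> real) \<Rightarrow> bool" where
  "circ E h \<longleftrightarrow> (\<forall>S. outs E S h = ins E S h)"

lemma outs_add: "outs E S (\<lambda>e. h e + k e) = outs E S h + outs E S k"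
  by (simp add: outs_def sum.distrib)
lemma ins_add: "ins E S (\<lambda>e. h e + k e) = ins E S h + ins E S k"
  by (simp add: ins_def sum.distrib)
lemma outs_scale: "outs E S (\<lambda>e. c * h e) = c * outs E S h"
  by (simp add: outs_def sum_distrib_left)
lemma ins_scale: "ins E S (\<lambda>e. c * h e) = c * ins E S h"
  by (simp add: ins_def sum_distrib_left)
lemma outs_neg: "outs E S (\<lambda>e. - h e) = - outs E S h"
  by (simp add: outs_def sum_negf)
lemma ins_neg: "ins E S (\<lambda>e. - h e) = - ins E S h"
  by (simp add: ins_def sum_negf)

lemma flow_zero: "flow E x x (\<lambda>_. 0)"
  by (simp add: flow_def outs_def ins_def)

lemma flow_trans:
  assumes a: "flow E x y p" and b: "flow E y z q"
  shows "flow E x z (\<lambda>e. p e + q e)"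
  unfolding flow_def
proof
  fix S
  have 1: "outs E S p - ins E S p = (if x \<in> S then 1 else 0) - (if y \<in> S then 1 else 0)"
    using a unfolding flow_def by blast
  have 2: "outs E S q - ins E S q = (if y \<in> S then 1 else 0) - (if z \<in> S then 1 else 0)"
    using b unfolding flow_def by blast
  show "outs E S (\<lambda>e. p e + q e) - ins E S (\<lambda>e. p e + q e) = (if x \<in> S then 1 else 0) - (if z \<in> S then 1 else 0)"
    unfolding outs_add ins_add using 1 2 by linarith
qed

lemma flow_neg:
  assumes a: "flow E x y p"
  shows "flow E y x (\<lambda>e. - p e)"
  unfolding flow_def
proof
  fix S
  have 1: "outs E S p - ins E S p = (if x \<in> S then 1 else 0) - (if y \<in> S then 1 else 0)"
    using a unfolding flow_def by blast
  show "outs E S (\<lambda>e. - p e) - ins E S (\<lambda>e. - p e) = (if y \<in> S then 1 else 0) - (if x \<in> S then 1 else 0)"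
    unfolding outs_neg ins_neg using 1 by linarith
qed

lemma flow_edge:
  assumes "finite E" "(x, y) \<in> E"
  shows "flow E x y (\<lambda>e. if e = (x, y) then 1 else 0)"
  using assms by (auto simp: flow_def outs_def ins_def sum.delta)

lemma flow_circ: "flow E x x h \<Longrightarrow> circ E h"
  unfolding flow_def circ_def by force

lemma circ_add: "circ E h \<Longrightarrow> circ E k \<Longrightarrow> circ E (\<lambda>e. h e + k e)"
  unfolding circ_def by (simp add: outs_add ins_add)

lemma circ_scale: "circ E h \<Longrightarrow> circ E (\<lambda>e. c * h e)"
  unfolding circ_def by (simp add: outs_scale ins_scale)

lemma circ_zero: "circ E (\<lambda>_. 0)"
  unfolding circ_def by (simp add: outs_def ins_def)

lemma circ_sum:
  assumes "finite I" "\<forall>i\<in>I. circ E (h i)"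
  shows "circ E (\<lambda>e. \<Sum>i\<in>I. h i e)"
  unfolding circ_def
proof
  fix S
  have "outs E S (\<lambda>e. \<Sum>i\<in>I. h i e) = (\<Sum>i\<in>I. outs E S (h i))"
    unfolding outs_def by (rule sum.swap)
  also have "\<dots> = (\<Sum>i\<in>I. ins E S (h i))"
    by (rule sum.cong) (use assms(2) in \<open>auto simp: circ_def\<close>)
  also have "\<dots> = ins E S (\<lambda>e. \<Sum>i\<in>I. h i e)"
    unfolding ins_def by (rule sum.swap)
  finally show "outs E S (\<lambda>e. \<Sum>i\<in>I. h i e) = ins E S (\<lambda>e. \<Sum>i\<in>I. h i e)" .
qed

lemma pos_path:
  assumes "finite E" "(a, b) \<in> E\<^sup>*"
  shows "\<exists>p. flow E a b p \<and> (\<forall>e. p e \<ge> 0)"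
  using assms(2)
proof (induction rule: rtrancl_induct)
  case base
  show ?case by (intro exI[of _ "\<lambda>_. 0"]) (simp add: flow_zero)
next
  case (step y z)
  then obtain p where p: "flow E a y p" "\<forall>e. p e \<ge> 0" by blast
  show ?case
    apply (intro exI[of _ "\<lambda>e. p e + (if e = (y, z) then 1 else 0)"])
    using flow_trans[OF p(1) flow_edge[OF assms(1) step(2)]] p(2) by auto
qed

lemma underlying_cases:
  "{y, z} \<in> underlying_edges E \<Longrightarrow> (y, z) \<in> E \<or> (z, y) \<in> E"
  by (auto simp: underlying_edges_def doubleton_eq_iff)

lemma undir_path:
  assumes "finite E"
    "(a, b) \<in> {(x, y). x \<in> V \<and> y \<in> V \<and> {x, y} \<in> underlying_edges E - D}\<^sup>*"
  shows "\<exists>p. flow E a b p \<and> (\<forall>e\<in>E. {fst e, snd e} \<in> D \<longrightarrow> p e = 0)"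
  using assms(2)
proof (induction rule: rtrancl_induct)
  case base
  show ?case by (intro exI[of _ "\<lambda>_. 0"]) (simp add: flow_zero)
next
  case (step y z)
  then obtain p where p: "flow E a y p" "\<forall>e\<in>E. {fst e, snd e} \<in> D \<longrightarrow> p e = 0" by blast
  have yz: "{y, z} \<in> underlying_edges E" "{y, z} \<notin> D" using step(2) by auto
  from underlying_cases[OF yz(1)] show ?case
  proof
    assume e: "(y, z) \<in> E"
    show ?case
      apply (intro exI[of _ "\<lambda>e. p e + (if e = (y, z) then 1 else 0)"])
      using flow_trans[OF p(1) flow_edge[OF assms(1) e]] p(2) yz(2) by auto
  next
    assume e: "(z, y) \<in> E"
    have yz2: "{z, y} \<notin> D" using yz(2) by (simp add: insert_commute)
    show ?case
      apply (intro exI[of _ "\<lambda>e. p e + - (if e = (z, y) then 1 else 0)"])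
      using flow_trans[OF p(1) flow_neg[OF flow_edge[OF assms(1) e]]] p(2) yz2 by auto
  qed
qed

lemma crossing:
  assumes "(u, w) \<in> R\<^sup>*" "u \<in> S" "w \<notin> S"
  shows "\<exists>x y. (x, y) \<in> R \<and> x \<in> S \<and> y \<notin> S"
  using assms
proof (induction rule: rtrancl_induct)
  case base then show ?case by simp
next
  case (step y z)
  then show ?case by (cases "y \<in> S") auto
qed

lemma L:
  assumes "circ E h" "finite E"
    "\<forall>e\<in>E. fst e \<in> S \<and> snd e \<notin> S \<longrightarrow> h e \<le> 0"
    "\<forall>e\<in>E. snd e \<in> S \<and> fst e \<notin> S \<longrightarrow> h e > 0"
    "e0 \<in> E" "snd e0 \<in> S" "fst e0 \<notin> S"
  shows False
proof -
  have o: "outs E S h \<le> 0" unfolding outs_def by (rule sum_nonpos) (use assms in auto)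
  have "e0 \<in> {e\<in>E. snd e \<in> S \<and> fst e \<notin> S}" using assms by blast
  then have "{e\<in>E. snd e \<in> S \<and> fst e \<notin> S} \<noteq> {}" by blast
  moreover have "finite {e\<in>E. snd e \<in> S \<and> fst e \<notin> S}" using assms(2) by simp
  ultimately have i: "ins E S h > 0" unfolding ins_def using assms(4) by (intro sum_pos) auto
  have "outs E S h = ins E S h" using assms(1) unfolding circ_def by blast
  then show False using o i by linarith
qed

lemma NS:
  assumes g: "circ E g" and f: "circ E f" and fpos: "\<forall>e\<in>E. f e > 0" and fin: "finite E"
    and ne1: "{e\<in>E. fst e \<in> S \<and> snd e \<notin> S} \<noteq> {}"
    and ne2: "{e\<in>E. snd e \<in> S \<and> fst e \<notin> S} \<noteq> {}"
    and sep: "\<forall>a\<in>{e\<in>E. fst e \<in> S \<and> snd e \<notin> S}. \<forall>b\<in>{e\<in>E. snd e \<in> S \<and> fst e \<notin> S}.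
                 g a / f a < g b / f b"
  shows False
proof -
  let ?O = "{e\<in>E. fst e \<in> S \<and> snd e \<notin> S}"
  define \<tau> where "\<tau> = Max ((\<lambda>x. g x / f x) ` ?O)"
  have finO: "finite ?O" using fin by simp
  have le: "g a / f a \<le> \<tau>" if "a \<in> ?O" for a
    unfolding \<tau>_def using finO that by (intro Max_ge) auto
  have "\<tau> \<in> (\<lambda>x. g x / f x) ` ?O" unfolding \<tau>_def using finO ne1 by (intro Max_in) auto
  then obtain a0 where a0: "a0 \<in> ?O" "g a0 / f a0 = \<tau>" by force
  define h where "h = (\<lambda>e. g e + (- \<tau>) * f e)"
  have hc: "circ E h" unfolding h_def by (intro circ_add circ_scale g f)
  obtain e0 where e0: "e0 \<in> E" "snd e0 \<in> S" "fst e0 \<notin> S" using ne2 by auto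
  show False
  proof (rule L[OF hc fin _ _ e0])
    show "\<forall>e\<in>E. fst e \<in> S \<and> snd e \<notin> S \<longrightarrow> h e \<le> 0"
    proof (intro ballI impI)
      fix e assume "e \<in> E" "fst e \<in> S \<and> snd e \<notin> S"
      then have "g e / f e \<le> \<tau>" "f e > 0" using le fpos by auto
      then have "g e \<le> \<tau> * f e" by (simp add: pos_divide_le_eq)
      then show "h e \<le> 0" unfolding h_def by simp
    qed
    show "\<forall>e\<in>E. snd e \<in> S \<and> fst e \<notin> S \<longrightarrow> h e > 0"
    proof (intro ballI impI)
      fix e assume "e \<in> E" "snd e \<in> S \<and> fst e \<notin> S"
      then have "e \<in> {e\<in>E. snd e \<in> S \<and> fst e \<notin> S}" by blast
      then have "g a0 / f a0 < g e / f e" using sep a0(1) by blast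
      then have "\<tau> < g e / f e" "f e > 0" using a0(2) fpos \<open>e \<in> E\<close> by auto
      then have "\<tau> * f e < g e" by (simp add: pos_less_divide_eq)
      then show "h e > 0" unfolding h_def by simp
    qed
  qed
qed

lemma generic:
  assumes fin: "finite Q"
    and sep: "\<And>a b. (a, b) \<in> Q \<Longrightarrow> \<exists>h. circ E h \<and> h a * f b \<noteq> h b * (f a :: real)"
  shows "\<exists>g. circ E g \<and> (\<forall>(a, b)\<in>Q. g a * f b \<noteq> g b * f a)"
  using fin sep
proof (induction Q rule: finite_induct)
  case empty
  show ?case using circ_zero by blast
next
  case (insert q Q)
  obtain g where g: "circ E g" "\<forall>(a, b)\<in>Q. g a * f b \<noteq> g b * f a"
    using insert by auto
  obtain a b where q: "q = (a, b)" by (cases q) blast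
  obtain h where h: "circ E h" "h a * f b \<noteq> h b * f a" using insert(4)[of a b] q by auto
  define B where "B = (\<lambda>(x, y). - (g x * f y - g y * f x) / (h x * f y - h y * f x)) ` insert q Q"
  have "finite B" unfolding B_def using insert by simp
  then obtain c :: real where c: "c \<notin> B" using ex_new_if_finite infinite_UNIV_char_0 by blast
  define g' where "g' = (\<lambda>e. g e + c * h e)"
  have "circ E g'" unfolding g'_def by (intro circ_add circ_scale g h)
  moreover have "\<forall>(x, y)\<in>insert q Q. g' x * f y \<noteq> g' y * f x"
  proof (clarify)
    fix x y assume xy: "(x, y) \<in> insert q Q" and eq: "g' x * f y = g' y * f x"
    let ?Dg = "g x * f y - g y * f x" and ?Dh = "h x * f y - h y * f x"
    have 0: "?Dg + c * ?Dh = 0" using eq unfolding g'_def by (simp add: algebra_simps)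
    show False
    proof (cases "?Dh = 0")
      case True
      then have "?Dg = 0" using 0 by simp
      moreover have "(x, y) \<in> Q" using xy True h(2) q by auto
      ultimately show False using g(2) by auto
    next
      case False
      then have "c = - ?Dg / ?Dh" using 0 by (simp add: field_simps)
      then have "c \<in> B" unfolding B_def using xy by force
      then show False using c by simp
    qed
  qed
  ultimately show ?case by blast
qed

lemma oc_swap: "(P, N) \<in> order_circuits r \<Longrightarrow> (N, P) \<in> order_circuits r"
  unfolding order_circuits_def by blast

lemma oc3:
  assumes slo: "strict_linear_order_on E r" and E: "d \<in> E" "x \<in> E" "y \<in> E"
    and ne: "d \<noteq> x" "d \<noteq> y" "x \<noteq> y"
  shows "\<exists>P N. (P, N) \<in> order_circuits r \<and> P \<union> N \<subseteq> {d, x, y} \<and> d \<in> P \<and> d \<notin> N"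
proof -
  have tr: "trans r" and tot: "total_on E r" and irr: "irrefl r"
    using slo by (auto simp: strict_linear_order_on_def)
  have A: "\<And>a b c. (a, b) \<in> r \<Longrightarrow> (b, c) \<in> r \<Longrightarrow>
      ({a, c}, {b}) \<in> order_circuits r \<and> ({b}, {a, c}) \<in> order_circuits r"
    unfolding order_circuits_def by blast
  have t: "\<And>u v. u \<in> E \<Longrightarrow> v \<in> E \<Longrightarrow> u \<noteq> v \<Longrightarrow> (u, v) \<in> r \<or> (v, u) \<in> r"
    using tot by (auto simp: total_on_def)
  consider "(d, x) \<in> r" | "(x, d) \<in> r" using t E ne by blast
  note c1 = this
  consider "(d, y) \<in> r" | "(y, d) \<in> r" using t E ne by blast
  note c2 = this
  consider "(x, y) \<in> r" | "(y, x) \<in> r" using t E ne by blast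
  note c3 = this
  show ?thesis
  proof (cases rule: c1)
    case 1
    show ?thesis
    proof (cases rule: c2)
      case 1
      show ?thesis
      proof (cases rule: c3)
        case 1
        have "({d, y}, {x}) \<in> order_circuits r" using A[OF \<open>(d,x)\<in>r\<close> 1] by blast
        then show ?thesis using ne by (intro exI[of _ "{d, y}"] exI[of _ "{x}"]) auto
      next
        case 2
        have "({d, x}, {y}) \<in> order_circuits r" using A[OF \<open>(d,y)\<in>r\<close> 2] by blast
        then show ?thesis using ne by (intro exI[of _ "{d, x}"] exI[of _ "{y}"]) auto
      qed
    next
      case 2
      have "({d}, {y, x}) \<in> order_circuits r" using A[OF 2 \<open>(d,x)\<in>r\<close>] by blast
      then show ?thesis using ne by (intro exI[of _ "{d}"] exI[of _ "{y, x}"]) auto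
    qed
  next
    case 2
    show ?thesis
    proof (cases rule: c2)
      case 1
      have "({d}, {x, y}) \<in> order_circuits r" using A[OF \<open>(x,d)\<in>r\<close> 1] by blast
      then show ?thesis using ne by (intro exI[of _ "{d}"] exI[of _ "{x, y}"]) auto
    next
      case 2
      show ?thesis
      proof (cases rule: c3)
        case 1
        have "({x, d}, {y}) \<in> order_circuits r" using A[OF 1 \<open>(y,d)\<in>r\<close>] by blast
        then show ?thesis using ne by (intro exI[of _ "{x, d}"] exI[of _ "{y}"]) auto
      next
        case 2
        have "({y, d}, {x}) \<in> order_circuits r" using A[OF 2 \<open>(x,d)\<in>r\<close>] by blast
        then show ?thesis using ne by (intro exI[of _ "{y, d}"] exI[of _ "{x}"]) auto
      qed
    qed
  qed
qed

lemma oc3N: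
  assumes "strict_linear_order_on E r" "d \<in> E" "x \<in> E" "y \<in> E" "d \<noteq> x" "d \<noteq> y" "x \<noteq> y"
  shows "\<exists>P N. (P, N) \<in> order_circuits r \<and> P \<union> N \<subseteq> {d, x, y} \<and> d \<in> N \<and> d \<notin> P"
proof -
  obtain P N where "(P, N) \<in> order_circuits r" "P \<union> N \<subseteq> {d, x, y}" "d \<in> P" "d \<notin> N"
    using oc3[OF assms] by blast
  then show ?thesis using oc_swap by blast
qed

lemma extend:
  assumes slo: "strict_linear_order_on E r" and C0: "(P0, N0) \<in> vectors_of (order_circuits r)"
    and sub: "P \<union> N \<subseteq> E" "finite (P \<union> N)" "P \<inter> N = {}" "P0 \<subseteq> P" "N0 \<subseteq> N"
    and xy: "x \<in> P0 \<union> N0" "y \<in> P0 \<union> N0" "x \<noteq> y"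
  shows "(P, N) \<in> vectors_of (order_circuits r)"
proof -
  have "A \<subseteq> P \<union> N \<Longrightarrow> (P0 \<union> (A \<inter> P), N0 \<union> (A \<inter> N)) \<in> vectors_of (order_circuits r)"
    if "finite A" for A
    using that
  proof (induction A rule: finite_induct)
    case empty then show ?case using C0 by simp
  next
    case (insert d A)
    let ?X = "(P0 \<union> (A \<inter> P), N0 \<union> (A \<inter> N))"
    have IH: "?X \<in> vectors_of (order_circuits r)" using insert by auto
    show ?case
    proof (cases "d \<in> P0 \<union> N0 \<union> A")
      case True
      then have "(P0 \<union> (insert d A \<inter> P), N0 \<union> (insert d A \<inter> N)) = ?X" using sub by auto
      then show ?thesis using IH by simp
    next
      case False
      have dE: "d \<in> E" "x \<in> E" "y \<in> E" using insert sub xy by auto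
      have dx: "d \<noteq> x" "d \<noteq> y" using False xy by auto
      have "d \<in> P \<or> d \<in> N" using insert by auto
      then show ?thesis
      proof
        assume dP: "d \<in> P"
        obtain P' N' where Y: "(P', N') \<in> order_circuits r" "P' \<union> N' \<subseteq> {d, x, y}" "d \<in> P'" "d \<notin> N'"
          using oc3[OF slo dE dx xy(3)] by blast
        have "compose ?X (P', N') = (P0 \<union> (insert d A \<inter> P), N0 \<union> (insert d A \<inter> N))"
          using Y dP False xy sub unfolding compose_def by auto
        then show ?thesis using vectors_of.comp[OF IH Y(1)] by simp
      next
        assume dN: "d \<in> N"
        obtain P' N' where Y: "(P', N') \<in> order_circuits r" "P' \<union> N' \<subseteq> {d, x, y}" "d \<in> N'" "d \<notin> P'"
          using oc3N[OF slo dE dx xy(3)] by blast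
        have "compose ?X (P', N') = (P0 \<union> (insert d A \<inter> P), N0 \<union> (insert d A \<inter> N))"
          using Y dN False xy sub unfolding compose_def by auto
        then show ?thesis using vectors_of.comp[OF IH Y(1)] by simp
      qed
    qed
  qed
  from this[of "P \<union> N"] sub show ?thesis
    by (simp add: Int_absorb2 Un_absorb1 Int_commute)
qed


theorem corollaryc:
  fixes V :: "'v set" and E :: "('v \<times> 'v) set"
  assumes "digraph_ok V E"
    and "totally_cyclic E"
    and "three_edge_connected V (underlying_edges E)"
  shows "\<exists>r. strict_linear_order_on E r \<and> r \<subseteq> E \<times> E
           \<and> strong_map (cut_circuits V E) (order_circuits r)"
proof -
  have finV: "finite V" and EV: "E \<subseteq> V \<times> V" using assms(1) by (auto simp: digraph_ok_def)
  have finE: "finite E" using finV EV finite_subset by blast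
  have conn: "connected_on V (underlying_edges E - D)" if "D \<subseteq> underlying_edges E" "card D < 3" for D
    using assms(3) that unfolding three_edge_connected_def by blast
  have "\<forall>e\<in>E. \<exists>c. circ E c \<and> (\<forall>x. c x \<ge> 0) \<and> c e \<ge> 1"
  proof
    fix e assume eE: "e \<in> E"
    obtain u w where e: "e = (u, w)" by fastforce
    have "(w, u) \<in> E\<^sup>*" using assms(2) eE e unfolding totally_cyclic_def by blast
    then obtain p where p: "flow E w u p" "\<forall>x. p x \<ge> 0" using pos_path[OF finE] by blast
    have "circ E (\<lambda>x. (if x = (u, w) then 1 else 0) + p x)"
      using flow_circ[OF flow_trans[OF flow_edge[OF finE] p(1)]] eE e by blast
    then show "\<exists>c. circ E c \<and> (\<forall>x. c x \<ge> 0) \<and> c e \<ge> 1"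
      using p(2) e by (intro exI[of _ "\<lambda>x. (if x = (u, w) then 1 else 0) + p x"]) auto
  qed
  then obtain C where C: "\<forall>e\<in>E. circ E (C e) \<and> (\<forall>x. C e x \<ge> 0) \<and> C e e \<ge> 1" by metis
  define f where "f = (\<lambda>x. \<Sum>e\<in>E. C e x)"
  have fcirc: "circ E f" unfolding f_def using circ_sum[OF finE] C by blast
  have fpos: "\<forall>x\<in>E. f x > 0"
  proof
    fix x assume xE: "x \<in> E"
    have "C x x \<le> f x" unfolding f_def by (rule member_le_sum) (use xE C finE in blast)+
    then show "f x > 0" using C xE by force
  qed
  have key: "\<exists>h. circ E h \<and> h a = 1 \<and> h b = 0" if ab: "a \<in> E" "b \<in> E" "a \<noteq> b" for a b
  proof -
    obtain u w where a: "a = (u, w)" by fastforce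
    define D where "D = {{u, w}, {fst b, snd b}}"
    have "{u, w} \<in> underlying_edges E" unfolding underlying_edges_def using ab a by auto
    moreover have "{fst b, snd b} \<in> underlying_edges E" unfolding underlying_edges_def using ab
      by (cases b) auto
    ultimately have "D \<subseteq> underlying_edges E" unfolding D_def by auto
    moreover have "card D < 3" unfolding D_def by (cases "{u, w} = {fst b, snd b}") auto
    ultimately have cn: "connected_on V (underlying_edges E - D)" using conn by blast
    have "u \<in> V" "w \<in> V" using EV ab a by auto
    then have "(w, u) \<in> {(x, y). x \<in> V \<and> y \<in> V \<and> {x, y} \<in> underlying_edges E - D}\<^sup>*"
      using cn unfolding connected_on_def by blast
    then obtain p where p: "flow E w u p" "\<forall>e\<in>E. {fst e, snd e} \<in> D \<longrightarrow> p e = 0"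
      using undir_path[OF finE] by blast
    have "circ E (\<lambda>x. (if x = (u, w) then 1 else 0) + p x)"
      using flow_circ[OF flow_trans[OF flow_edge[OF finE] p(1)]] ab a by blast
    moreover have "p a = 0" "p b = 0" using p(2) ab a unfolding D_def by auto
    ultimately show ?thesis using ab a
      by (intro exI[of _ "\<lambda>x. (if x = (u, w) then 1 else 0) + p x"]) auto
  qed
  have sep: "\<exists>h. circ E h \<and> h a * f b \<noteq> h b * f a" if "(a, b) \<in> {(a, b). a \<in> E \<and> b \<in> E \<and> a \<noteq> b}" for a b
  proof -
    have "a \<in> E" "b \<in> E" "a \<noteq> b" using that by auto
    then obtain h where "circ E h" "h a = 1" "h b = 0" using key by blast
    moreover have "f b > 0" using fpos that by auto
    ultimately show ?thesis by (intro exI[of _ h]) auto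
  qed
  have finQ: "finite {(a, b). a \<in> E \<and> b \<in> E \<and> a \<noteq> b}"
    by (rule finite_subset[of _ "E \<times> E"]) (use finE in auto)
  obtain g where g: "circ E g" "\<forall>(a, b)\<in>{(a, b). a \<in> E \<and> b \<in> E \<and> a \<noteq> b}. g a * f b \<noteq> g b * f a"
    using generic[OF finQ sep] by blast
  define t where "t = (\<lambda>x. g x / f x)"
  have tinj: "t a \<noteq> t b" if "a \<in> E" "b \<in> E" "a \<noteq> b" for a b
  proof
    assume "t a = t b"
    moreover have "f a \<noteq> 0" "f b \<noteq> 0" using fpos that by (metis less_irrefl)+
    ultimately have "g a * f b = g b * f a" unfolding t_def
      by (simp add: frac_eq_eq)
    then show False using bspec[OF g(2), of "(a, b)"] that by simp
  qed
  define r where "r = {(a, b). a \<in> E \<and> b \<in> E \<and> t a < t b}"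
  have slo: "strict_linear_order_on E r"
  proof -
    have "trans r" unfolding trans_def r_def by auto
    moreover have "irrefl r" unfolding irrefl_def r_def by auto
    moreover have "total_on E r" unfolding total_on_def
    proof (intro ballI impI)
      fix a b assume "a \<in> E" "b \<in> E" "a \<noteq> b"
      then have "t a \<noteq> t b" using tinj by blast
      then have "t a < t b \<or> t b < t a" by linarith
      then show "(a, b) \<in> r \<or> (b, a) \<in> r" unfolding r_def using \<open>a \<in> E\<close> \<open>b \<in> E\<close> by auto
    qed
    ultimately show ?thesis unfolding strict_linear_order_on_def by blast
  qed
  have "cut_circuits V E \<subseteq> vectors_of (order_circuits r)"
  proof
    fix X assume "X \<in> cut_circuits V E"
    then obtain S where S: "S \<subseteq> V" "S \<noteq> {}" "S \<noteq> V"
      and X: "X = ({(u, w) \<in> E. u \<in> S \<and> w \<notin> S}, {(u, w) \<in> E. w \<in> S \<and> u \<notin> S})"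
      unfolding cut_circuits_def by blast
    define Ou where "Ou = {e\<in>E. fst e \<in> S \<and> snd e \<notin> S}"
    define In where "In = {e\<in>E. snd e \<in> S \<and> fst e \<notin> S}"
    have X': "X = (Ou, In)" unfolding X Ou_def In_def by auto
    have Ou': "{e\<in>E. fst e \<in> - S \<and> snd e \<notin> - S} = In" unfolding In_def by auto
    have In': "{e\<in>E. snd e \<in> - S \<and> fst e \<notin> - S} = Ou" unfolding Ou_def by auto
    obtain u0 w0 where u0: "u0 \<in> S" "w0 \<in> V" "w0 \<notin> S" using S by blast
    have "connected_on V (underlying_edges E - {})" by (rule conn) auto
    then have path: "(u0, w0) \<in> {(x, y). x \<in> V \<and> y \<in> V \<and> {x, y} \<in> underlying_edges E - {}}\<^sup>*"
      using u0 S unfolding connected_on_def by blast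
    obtain x y where xy: "(x, y) \<in> {(x, y). x \<in> V \<and> y \<in> V \<and> {x, y} \<in> underlying_edges E - {}}"
      "x \<in> S" "y \<notin> S"
      using crossing[OF path u0(1) u0(3)] by blast
    have "{x, y} \<in> underlying_edges E" using xy(1) by simp
    then have "(x, y) \<in> E \<or> (y, x) \<in> E" by (rule underlying_cases)
    then have cross: "Ou \<union> In \<noteq> {}" using xy unfolding Ou_def In_def by auto
    have OuIn: "Ou \<noteq> {}" "In \<noteq> {}"
    proof -
      show "In \<noteq> {}"
      proof
        assume "In = {}"
        then have "Ou \<noteq> {}" using cross by auto
        then obtain e0 where "e0 \<in> Ou" by auto
        show False
          by (rule L[OF fcirc finE, of "- S" e0]) (use fpos \<open>In = {}\<close> \<open>e0 \<in> Ou\<close> in \<open>auto simp: In_def Ou_def\<close>)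
      qed
      show "Ou \<noteq> {}"
      proof
        assume "Ou = {}"
        then have "In \<noteq> {}" using cross by auto
        then obtain e0 where "e0 \<in> In" by auto
        show False
          by (rule L[OF fcirc finE, of S e0]) (use fpos \<open>Ou = {}\<close> \<open>e0 \<in> In\<close> in \<open>auto simp: In_def Ou_def\<close>)
      qed
    qed
    have disj: "Ou \<inter> In = {}" unfolding Ou_def In_def by auto
    have n1: "\<not> (\<forall>a\<in>Ou. \<forall>b\<in>In. t a < t b)"
    proof
      assume "\<forall>a\<in>Ou. \<forall>b\<in>In. t a < t b"
      then show False using NS[OF g(1) fcirc fpos finE, of S] OuIn unfolding Ou_def In_def t_def by blast
    qed
    have n2: "\<not> (\<forall>a\<in>In. \<forall>b\<in>Ou. t a < t b)"
    proof
      assume "\<forall>a\<in>In. \<forall>b\<in>Ou. t a < t b"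
      then show False using NS[OF g(1) fcirc fpos finE, of "- S"] OuIn
        unfolding Ou' In' unfolding t_def by blast
    qed
    obtain a b where ab: "a \<in> Ou" "b \<in> In" "t b < t a"
    proof -
      obtain a b where "a \<in> Ou" "b \<in> In" "\<not> t a < t b" using n1 by blast
      moreover have "t a \<noteq> t b" using tinj \<open>a \<in> Ou\<close> \<open>b \<in> In\<close> disj unfolding Ou_def In_def by blast
      ultimately have "t b < t a" by linarith
      then show ?thesis using that \<open>a \<in> Ou\<close> \<open>b \<in> In\<close> by blast
    qed
    obtain a' b' where ab': "a' \<in> Ou" "b' \<in> In" "t a' < t b'"
    proof -
      obtain a b where "a \<in> In" "b \<in> Ou" "\<not> t a < t b" using n2 by blast
      moreover have "t a \<noteq> t b" using tinj \<open>a \<in> In\<close> \<open>b \<in> Ou\<close> disj unfolding Ou_def In_def by blast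
      ultimately have "t b < t a" by linarith
      then show ?thesis using that \<open>a \<in> In\<close> \<open>b \<in> Ou\<close> by blast
    qed
    have OE: "Ou \<subseteq> E" "In \<subseteq> E" unfolding Ou_def In_def by auto
    have sub: "Ou \<union> In \<subseteq> E" "finite (Ou \<union> In)" using OE finE finite_subset by auto
    have v0: "Y \<in> vectors_of (order_circuits r)" if "Y \<in> order_circuits r" for Y
      using vectors_of.comp[OF vectors_of.zero that] by (simp add: compose_def)
    have "t a \<noteq> t b'" using tinj ab ab' disj OE by blast
    then consider "t a < t b'" | "t b' < t a" by linarith
    then have "(Ou, In) \<in> vectors_of (order_circuits r)"
    proof cases
      case 1
      have c: "({a}, {b, b'}) \<in> order_circuits r"
        unfolding order_circuits_def r_def using ab ab' 1 OE by blast
      show ?thesis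
        by (rule extend[OF slo v0[OF c] sub disj, where x=a and y=b]) (use ab ab' disj in auto)
    next
      case 2
      have c: "({a', a}, {b'}) \<in> order_circuits r"
        unfolding order_circuits_def r_def using ab ab' 2 OE by blast
      show ?thesis
        by (rule extend[OF slo v0[OF c] sub disj, where x=a' and y=b']) (use ab ab' disj in auto)
    qed
    then show "X \<in> vectors_of (order_circuits r)" using X' by simp
  qed
  moreover have "r \<subseteq> E \<times> E" unfolding r_def by auto
  ultimately show ?thesis using slo unfolding strong_map_def by blast
qed

end
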